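(* Let $m \ge 3$ and $n \ge 2$ be integers, and let $k \ge 1$ be the integer with $k^2 \le n < (k+1)^2$, so that $n = k^2 + h$ with $0 \le h \le 2k$. Then $\mathrm{sg_e}(P_n \,\square\, K_m) = mk$ if $h = 0$; $\mathrm{sg_e}(P_n \,\square\, K_m) = mk + (m-1)$ if $1 \le h \le k$; and $\mathrm{sg_e}(P_n \,\square\, K_m) = mk + m$ if $k+1 \le h \le 2k$. In particular, $\mathrm{sg_e}(P_2 \,\square\, K_m) = 2m-1$ for $m\ge 3$.
   Context: All graphs are finite, simple and connected. $P_n$ is the path on $n$ vertices and $K_m$ the complete graph on $m$ vertices. The Cartesian product $G \,\square\, H$ has vertex set $V(G)\times V(H)$, with $(g,h)$ adjacent to $(g',h')$ iff either $g=g'$ and $hh' \in E(H)$, or $h=h'$ and $gg' \in E(G)$. A set $S \subseteq V(G)$ is a strong edge geodetic set of $G$ if one can assign to every unordered pair $\{u,v\}$ of distinct vertices of $S$ either one shortest $u,v$-path $P_{uv}$ in $G$ or no path, in such a way that every edge of $G$ lies on at least one of the assigned paths. The strong edge geodetic number $\mathrm{sg_e}(G)$ is the minimum cardinality of a strong edge geodetic set of $G$. *)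

theory Defs
  imports Main
begin

text \<open>A graph is given by a vertex set V and a symmetric irreflexive adjacency relation E.\<close>

definition walk :: "'a set \<Rightarrow> ('a \<Rightarrow> 'a \<Rightarrow> bool) \<Rightarrow> 'a list \<Rightarrow> bool" where
  "walk V E P \<longleftrightarrow> P \<noteq> [] \<and> set P \<subseteq> V \<and> (\<forall>i. Suc i < length P \<longrightarrow> E (P ! i) (P ! Suc i))"

text \<open>A shortest u,v-path: a u,v-walk with minimum number of vertices (hence of edges) among
  all u,v-walks; such a walk is automatically a path.\<close>
definition shortest_path :: "'a set \<Rightarrow> ('a \<Rightarrow> 'a \<Rightarrow> bool) \<Rightarrow> 'a \<Rightarrow> 'a \<Rightarrow> 'a list \<Rightarrow> bool" where
  "shortest_path V E u v P \<longleftrightarrow> walk V E P \<and> hd P = u \<and> last P = v \<and>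
     (\<forall>Q. walk V E Q \<and> hd Q = u \<and> last Q = v \<longrightarrow> length P \<le> length Q)"

definition edge_on :: "'a \<Rightarrow> 'a \<Rightarrow> 'a list \<Rightarrow> bool" where
  "edge_on x y P \<longleftrightarrow> (\<exists>i. Suc i < length P \<and> {P ! i, P ! Suc i} = {x, y})"

definition strong_edge_geodetic :: "'a set \<Rightarrow> ('a \<Rightarrow> 'a \<Rightarrow> bool) \<Rightarrow> 'a set \<Rightarrow> bool" where
  "strong_edge_geodetic V E S \<longleftrightarrow> S \<subseteq> V \<and>
     (\<exists>p :: 'a set \<Rightarrow> 'a list option.
        (\<forall>u\<in>S. \<forall>v\<in>S. u \<noteq> v \<longrightarrow>
            (\<forall>P. p {u, v} = Some P \<longrightarrow> shortest_path V E u v P \<or> shortest_path V E v u P)) \<and>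
        (\<forall>x\<in>V. \<forall>y\<in>V. E x y \<longrightarrow>
            (\<exists>u\<in>S. \<exists>v\<in>S. \<exists>P. u \<noteq> v \<and> p {u, v} = Some P \<and> edge_on x y P)))"

definition sg_e :: "'a set \<Rightarrow> ('a \<Rightarrow> 'a \<Rightarrow> bool) \<Rightarrow> nat" where
  "sg_e V E = Min {card S | S. strong_edge_geodetic V E S}"

definition path_adj :: "nat \<Rightarrow> nat \<Rightarrow> bool" where
  "path_adj i j \<longleftrightarrow> i + 1 = j \<or> j + 1 = i"

definition complete_adj :: "nat \<Rightarrow> nat \<Rightarrow> bool" where
  "complete_adj i j \<longleftrightarrow> i \<noteq> j"

definition cart_adj :: "('a \<Rightarrow> 'a \<Rightarrow> bool) \<Rightarrow> ('b \<Rightarrow> 'b \<Rightarrow> bool) \<Rightarrow> 'a \<times> 'b \<Rightarrow> 'a \<times> 'b \<Rightarrow> bool" where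
  "cart_adj EG EH x y \<longleftrightarrow>
     (fst x = fst y \<and> EH (snd x) (snd y)) \<or> (snd x = snd y \<and> EG (fst x) (fst y))"

definition sge_Pn_Km :: "nat \<Rightarrow> nat \<Rightarrow> nat" where
  "sge_Pn_Km n m = sg_e ({0..<n} \<times> {0..<m}) (cart_adj path_adj complete_adj)"

end

theory Submission
  imports Defs
begin


abbreviation EE where "EE \<equiv> cart_adj path_adj complete_adj"

definition ad :: "nat \<Rightarrow> nat \<Rightarrow> nat" where
  "ad a b = (if a \<le> b then b - a else a - b)"

definition dd :: "nat \<times> nat \<Rightarrow> nat \<times> nat \<Rightarrow> nat" where
  "dd u v = ad (fst u) (fst v) + (if snd u = snd v then 0 else 1)"

lemma EE_dd: "EE x y \<Longrightarrow> dd x z \<le> dd y z + 1"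
  by (auto simp: cart_adj_def path_adj_def complete_adj_def dd_def ad_def)

lemma walk_Cons2: "walk V E (x # y # P) \<longleftrightarrow> x \<in> V \<and> E x y \<and> walk V E (y # P)"
proof
  assume w: "walk V E (x # y # P)"
  then have all: "\<forall>i. Suc i < length (x#y#P) \<longrightarrow> E ((x#y#P) ! i) ((x#y#P) ! Suc i)"
    and s: "set (x#y#P) \<subseteq> V" by (simp_all add: walk_def)
  have "E x y" using spec[OF all, of 0] by simp
  moreover have "\<forall>i. Suc i < length (y#P) \<longrightarrow> E ((y#P) ! i) ((y#P) ! Suc i)"
  proof (intro allI impI)
    fix i assume "Suc i < length (y#P)"
    then show "E ((y#P) ! i) ((y#P) ! Suc i)" using spec[OF all, of "Suc i"] by simp
  qed
  ultimately show "x \<in> V \<and> E x y \<and> walk V E (y # P)" using s by (simp add: walk_def)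
next
  assume a: "x \<in> V \<and> E x y \<and> walk V E (y # P)"
  show "walk V E (x # y # P)" unfolding walk_def
  proof (intro conjI allI impI)
    show "set (x # y # P) \<subseteq> V" using a by (simp add: walk_def)
    fix i assume i: "Suc i < length (x # y # P)"
    show "E ((x # y # P) ! i) ((x # y # P) ! Suc i)"
    proof (cases i)
      case 0 then show ?thesis using a by simp
    next
      case (Suc j) then show ?thesis using a i unfolding walk_def by simp
    qed
  qed simp
qed

lemma walk_single: "walk V E [x] \<longleftrightarrow> x \<in> V"
  by (simp add: walk_def)

lemma walk_len: "walk V EE P \<Longrightarrow> dd (hd P) (last P) + 1 \<le> length P"
proof (induction P)
  case Nil then show ?case by (simp add: walk_def)
next
  case (Cons x P)
  show ?case
  proof (cases P)
    case Nil then show ?thesis by (simp add: dd_def ad_def)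
  next
    case (Cons y P')
    with Cons.prems have "EE x y" "walk V EE P" by (auto simp: walk_Cons2)
    with Cons.IH \<open>P = y # P'\<close> have "dd y (last P) + 1 \<le> length P" by simp
    moreover have "dd x (last P) \<le> dd y (last P) + 1" using EE_dd[OF \<open>EE x y\<close>] .
    ultimately show ?thesis using Cons by simp
  qed
qed

lemma walk_append: "walk V E P \<Longrightarrow> walk V E Q \<Longrightarrow> E (last P) (hd Q) \<Longrightarrow> walk V E (P @ Q)"
proof (induction P rule: induct_list012)
  case 1 then show ?case by (simp add: walk_def)
next
  case (2 x) then show ?case
    by (cases Q) (auto simp: walk_Cons2 walk_single)
next
  case (3 x y zs)
  then show ?case by (auto simp: walk_Cons2)
qed

lemma walk_take: "walk V E P \<Longrightarrow> 0 < k \<Longrightarrow> walk V E (take k P)"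
  unfolding walk_def
  apply (intro conjI allI impI)
    apply simp
   apply (meson in_set_takeD subset_iff)
  apply simp
  done

lemma walk_drop: "walk V E P \<Longrightarrow> k < length P \<Longrightarrow> walk V E (drop k P)"
  unfolding walk_def
  apply (intro conjI allI impI)
    apply simp
   apply (meson in_set_dropD subset_iff)
  apply simp
  done

lemma shortestI: "walk V EE P \<Longrightarrow> hd P = u \<Longrightarrow> last P = v \<Longrightarrow> length P \<le> dd u v + 1
   \<Longrightarrow> shortest_path V EE u v P"
  unfolding shortest_path_def using walk_len by fastforce

definition sf :: "nat \<Rightarrow> nat \<Rightarrow> nat \<Rightarrow> nat" where
  "sf a b i = (if a \<le> b then a + i else a - i)"
definition seg :: "nat \<Rightarrow> nat \<Rightarrow> nat \<Rightarrow> (nat \<times> nat) list" where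
  "seg a b j = map (\<lambda>i. (sf a b i, j)) [0..<Suc (ad a b)]"

lemma seg_len[simp]: "length (seg a b j) = ad a b + 1"
  by (simp add: seg_def)
lemma seg_nth: "i \<le> ad a b \<Longrightarrow> seg a b j ! i = (sf a b i, j)"
  unfolding seg_def by (simp del: upt_Suc add: nth_map)
lemma seg_ne[simp]: "seg a b j \<noteq> []"
  by (simp add: seg_def)
lemma seg_hd[simp]: "hd (seg a b j) = (a, j)"
  by (simp add: hd_conv_nth seg_nth sf_def)
lemma seg_last[simp]: "last (seg a b j) = (b, j)"
  by (simp add: last_conv_nth seg_nth sf_def ad_def)

lemma sf_range: "i \<le> ad a b \<Longrightarrow> sf a b i \<le> max a b"
  by (auto simp: sf_def ad_def)

lemma seg_walk: assumes "a < n" "b < n" "j < m"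
  shows "walk ({0..<n} \<times> {0..<m}) EE (seg a b j)"
  unfolding walk_def
proof (intro conjI allI impI)
  show "seg a b j \<noteq> []" by simp
  show "set (seg a b j) \<subseteq> {0..<n} \<times> {0..<m}"
  proof
    fix x assume "x \<in> set (seg a b j)"
    then obtain i where "i < length (seg a b j)" "x = seg a b j ! i" by (metis in_set_conv_nth)
    then have "i \<le> ad a b" "x = (sf a b i, j)" by (auto simp: seg_nth)
    then show "x \<in> {0..<n} \<times> {0..<m}" using sf_range[of i a b] assms by auto
  qed
  fix i assume "Suc i < length (seg a b j)"
  then have "Suc i \<le> ad a b" by simp
  then show "EE (seg a b j ! i) (seg a b j ! Suc i)"
    by (simp add: seg_nth cart_adj_def path_adj_def sf_def ad_def split: if_splits) arith
qed

lemma seg_edge: assumes "min a b \<le> i" "i < max a b"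
  shows "edge_on (i, j) (Suc i, j) (seg a b j)"
proof (cases "a \<le> b")
  case True
  then have "Suc (i - a) < length (seg a b j)" "seg a b j ! (i - a) = (i, j)"
    "seg a b j ! Suc (i - a) = (Suc i, j)" using assms by (auto simp: seg_nth sf_def ad_def)
  then show ?thesis unfolding edge_on_def by metis
next
  case False
  then have "Suc (a - Suc i) < length (seg a b j)" "seg a b j ! (a - Suc i) = (Suc i, j)"
    "seg a b j ! Suc (a - Suc i) = (i, j)" using assms by (auto simp: seg_nth sf_def ad_def Suc_diff_Suc)
  then show ?thesis unfolding edge_on_def by (metis insert_commute)
qed

lemma edge_on_app1: "edge_on x y P \<Longrightarrow> edge_on x y (P @ Q)"
  unfolding edge_on_def
proof (elim exE conjE)
  fix i assume "Suc i < length P" "{P ! i, P ! Suc i} = {x, y}"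
  then show "\<exists>i. Suc i < length (P @ Q) \<and> {(P @ Q) ! i, (P @ Q) ! Suc i} = {x, y}"
    by (intro exI[of _ i]) (simp add: nth_append)
qed

lemma edge_on_app2: "edge_on x y Q \<Longrightarrow> edge_on x y (P @ Q)"
  unfolding edge_on_def
proof (elim exE conjE)
  fix i assume "Suc i < length Q" "{Q ! i, Q ! Suc i} = {x, y}"
  then show "\<exists>i. Suc i < length (P @ Q) \<and> {(P @ Q) ! i, (P @ Q) ! Suc i} = {x, y}"
    by (intro exI[of _ "length P + i"]) (simp add: nth_append)
qed

lemma edge_on_junction: "P \<noteq> [] \<Longrightarrow> Q \<noteq> [] \<Longrightarrow> edge_on (last P) (hd Q) (P @ Q)"
  unfolding edge_on_def
  by (intro exI[of _ "length P - 1"]) (auto simp: nth_append last_conv_nth hd_conv_nth)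

lemma geo2_walk: assumes "a < n" "t < n" "b < n" "j < m" "j' < m" "j \<noteq> j'"
  shows "walk ({0..<n} \<times> {0..<m}) EE (seg a t j @ seg t b j')"
  by (rule walk_append) (auto intro!: seg_walk simp: assms cart_adj_def complete_adj_def)

lemma dd_tri: "dd u w \<le> dd u v + dd v w"
  by (auto simp: dd_def ad_def)

lemma dd_EE: "EE x y \<Longrightarrow> dd x v \<le> dd y v + 1"
  by (rule EE_dd)

lemma geo_arith:
  assumes "EE x y" "snd x \<noteq> snd y" "dd u x + dd y v + 1 \<le> dd u v"
  shows "snd u = snd x \<and> snd v = snd y"
proof -
  have f: "fst x = fst y" using assms(1,2) by (auto simp: cart_adj_def)
  obtain a c1 where u: "u = (a, c1)" by (cases u)
  obtain b c2 where v: "v = (b, c2)" by (cases v)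
  obtain t j where x: "x = (t, j)" by (cases x)
  obtain j' where y: "y = (t, j')" using f x by (cases y) auto
  have "ad a b \<le> ad a t + ad t b" by (auto simp: ad_def)
  then show ?thesis using assms(2,3) unfolding u v x y dd_def
    by (auto split: if_splits)
qed

abbreviation VV :: "nat \<Rightarrow> nat \<Rightarrow> (nat \<times> nat) set" where
  "VV n m \<equiv> {0..<n} \<times> {0..<m}"

definition geo :: "(nat \<times> nat) set \<Rightarrow> (nat \<times> nat) list \<Rightarrow> bool" where
  "geo V P \<longleftrightarrow> walk V EE P \<and> length P = dd (hd P) (last P) + 1"

lemma shortest_geo: assumes "u \<in> VV n m" "v \<in> VV n m" "shortest_path (VV n m) EE u v P"
  shows "geo (VV n m) P"
proof -
  obtain a c1 where u: "u = (a, c1)" by (cases u)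
  obtain b c2 where v: "v = (b, c2)" by (cases v)
  have ex: "\<exists>Q. walk (VV n m) EE Q \<and> hd Q = u \<and> last Q = v \<and> length Q = dd u v + 1"
  proof (cases "c1 = c2")
    case True
    then show ?thesis using assms(1,2) unfolding u v
      by (intro exI[of _ "seg a b c1"]) (auto intro!: seg_walk simp: dd_def)
  next
    case False
    then show ?thesis using assms(1,2) unfolding u v
      by (intro exI[of _ "seg a b c1 @ seg b b c2"]) (auto intro!: geo2_walk simp: dd_def ad_def)
  qed
  then obtain Q where Q: "walk (VV n m) EE Q" "hd Q = u" "last Q = v" "length Q = dd u v + 1" by blast
  have "length P \<le> length Q" using assms(3) Q unfolding shortest_path_def by blast
  moreover have "dd u v + 1 \<le> length P" using assms(3) walk_len unfolding shortest_path_def by metis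
  ultimately show ?thesis using assms(3) Q unfolding geo_def shortest_path_def by auto
qed

lemma geo_split:
  assumes g: "geo V P" and i: "Suc i < length P" and c: "snd (P ! i) \<noteq> snd (P ! Suc i)"
  shows "snd (hd P) = snd (P ! i) \<and> snd (last P) = snd (P ! Suc i) \<and> geo V (drop (Suc i) P)"
proof -
  have w: "walk V EE P" and l: "length P = dd (hd P) (last P) + 1" using g by (auto simp: geo_def)
  have E: "EE (P ! i) (P ! Suc i)" using w i by (simp add: walk_def)
  have w1: "walk V EE (take (Suc i) P)" using walk_take[OF w] by simp
  have w2: "walk V EE (drop (Suc i) P)" using walk_drop[OF w i] .
  have P0: "P \<noteq> []" using i by auto
  have h1: "hd (take (Suc i) P) = hd P" using P0 by simp
  have l1: "last (take (Suc i) P) = P ! i" using i by (simp add: take_Suc_conv_app_nth)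
  have h2: "hd (drop (Suc i) P) = P ! Suc i" using i by (simp add: hd_drop_conv_nth)
  have l2: "last (drop (Suc i) P) = last P" using i by simp
  have len1: "length (take (Suc i) P) = Suc i" using i by simp
  have len2: "length (drop (Suc i) P) = length P - Suc i" by simp
  have a1: "dd (hd P) (P ! i) + 1 \<le> Suc i" using walk_len[OF w1] h1 l1 len1 by simp
  have a2: "dd (P ! Suc i) (last P) + 1 \<le> length P - Suc i" using walk_len[OF w2] h2 l2 len2 by simp
  have "dd (hd P) (P ! i) + dd (P ! Suc i) (last P) + 1 \<le> dd (hd P) (last P)"
    using a1 a2 l i by linarith
  from geo_arith[OF E c this] have cols: "snd (hd P) = snd (P ! i) \<and> snd (last P) = snd (P ! Suc i)" .
  have t1: "dd (hd P) (last P) \<le> dd (hd P) (P ! i) + dd (P ! i) (last P)" by (rule dd_tri)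
  have t2: "dd (P ! i) (last P) \<le> dd (P ! Suc i) (last P) + 1" using dd_EE[OF E] .
  have "length (drop (Suc i) P) \<le> dd (P ! Suc i) (last P) + 1"
    using len2 l a1 t1 t2 by linarith
  then have "geo V (drop (Suc i) P)" using walk_len[OF w2] h2 l2 w2 unfolding geo_def by simp
  with cols show ?thesis by blast
qed

lemma geo_unique:
  assumes g: "geo V P" and j: "j \<noteq> j'"
    and e1: "edge_on (t, j) (t, j') P" and e2: "edge_on (t', j) (t', j') P"
  shows "t = t'"
proof -
  obtain i where i: "Suc i < length P" "{P ! i, P ! Suc i} = {(t, j), (t, j')}"
    using e1 unfolding edge_on_def by blast
  obtain i' where i': "Suc i' < length P" "{P ! i', P ! Suc i'} = {(t', j), (t', j')}"
    using e2 unfolding edge_on_def by blast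
  have ci: "snd (P ! i) \<noteq> snd (P ! Suc i)" using i(2) j by (auto simp: doubleton_eq_iff)
  have ci': "snd (P ! i') \<noteq> snd (P ! Suc i')" using i'(2) j by (auto simp: doubleton_eq_iff)
  note s1 = geo_split[OF g i(1) ci]
  note s2 = geo_split[OF g i'(1) ci']
  have False if lt: "i < i'"
    and A: "Suc i < length P" "snd (P ! i) \<noteq> snd (P ! Suc i)"
    and B: "Suc i' < length P" "snd (P ! i') \<noteq> snd (P ! Suc i')" for i i'
  proof -
    note a = geo_split[OF g A]
    note b = geo_split[OF g B]
    define k where "k = i' - Suc i"
    have D: "drop (Suc i) P ! k = P ! i'" "drop (Suc i) P ! Suc k = P ! Suc i'"
      using lt B(1) by (auto simp: k_def)
    have k: "Suc k < length (drop (Suc i) P)" using lt B(1) by (auto simp: k_def)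
    have "snd (drop (Suc i) P ! k) \<noteq> snd (drop (Suc i) P ! Suc k)" using D B(2) by simp
    note c = geo_split[OF conjunct2[OF conjunct2[OF a]] k this]
    have "hd (drop (Suc i) P) = P ! Suc i" using A(1) by (simp add: hd_drop_conv_nth)
    then show False using a b c D A(2) by auto
  qed
  then have "i = i'" using i(1) ci i'(1) ci' by (metis linorder_neqE_nat)
  then show ?thesis using i(2) i'(2) j by (auto simp: doubleton_eq_iff)
qed

definition col :: "(nat \<times> nat) set \<Rightarrow> nat \<Rightarrow> nat set" where
  "col S j = {i. (i, j) \<in> S}"

lemma pair_bound:
  assumes sg: "strong_edge_geodetic (VV n m) EE S" and j: "j < m" "j' < m" "j \<noteq> j'"
  shows "n \<le> card (col S j) * card (col S j')"
proof -
  obtain p where p1: "\<forall>u\<in>S. \<forall>v\<in>S. u \<noteq> v \<longrightarrow> (\<forall>P. p {u,v} = Some P \<longrightarrow>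
        shortest_path (VV n m) EE u v P \<or> shortest_path (VV n m) EE v u P)"
    and p2: "\<forall>x\<in>VV n m. \<forall>y\<in>VV n m. EE x y \<longrightarrow>
        (\<exists>u\<in>S. \<exists>v\<in>S. \<exists>P. u \<noteq> v \<and> p {u,v} = Some P \<and> edge_on x y P)"
    and SV: "S \<subseteq> VV n m"
    using sg unfolding strong_edge_geodetic_def by blast
  define Q where "Q t ab \<longleftrightarrow> (fst ab, j) \<in> S \<and> (snd ab, j') \<in> S \<and>
     (\<exists>P. p {(fst ab, j), (snd ab, j')} = Some P \<and> edge_on (t,j) (t,j') P \<and> geo (VV n m) P)"
    for t ab
  have ex: "\<exists>ab. Q t ab" if t: "t < n" for t
  proof -
    have "(t,j) \<in> VV n m" "(t,j') \<in> VV n m" "EE (t,j) (t,j')"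
      using t j by (auto simp: cart_adj_def complete_adj_def)
    then obtain u v P where uv: "u \<in> S" "v \<in> S" "u \<noteq> v" "p {u,v} = Some P"
      "edge_on (t,j) (t,j') P" using p2 by blast
    have sp: "shortest_path (VV n m) EE u v P \<or> shortest_path (VV n m) EE v u P"
      using p1 uv by blast
    have uvV: "u \<in> VV n m" "v \<in> VV n m" using uv SV by auto
    have g: "geo (VV n m) P" using sp shortest_geo[OF uvV] shortest_geo[OF uvV(2,1)] by blast
    have hl: "{hd P, last P} = {u, v}" using sp by (auto simp: shortest_path_def)
    obtain i where i: "Suc i < length P" "{P ! i, P ! Suc i} = {(t,j),(t,j')}"
      using uv(5) unfolding edge_on_def by blast
    have ci: "snd (P ! i) \<noteq> snd (P ! Suc i)" using i(2) j by (auto simp: doubleton_eq_iff)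
    from geo_split[OF g i(1) ci] have cc: "snd (hd P) = snd (P ! i)" "snd (last P) = snd (P ! Suc i)"
      by auto
    have hS: "hd P \<in> S" "last P \<in> S" using hl uv by (auto simp: doubleton_eq_iff)
    show ?thesis
    proof (cases "P ! i = (t, j)")
      case True
      then have "P ! Suc i = (t, j')" using i(2) j by (auto simp: doubleton_eq_iff)
      then have "hd P = (fst (hd P), j)" "last P = (fst (last P), j')" using cc True
        by (metis prod.collapse snd_conv)+
      then show ?thesis unfolding Q_def using hS hl uv g
        by (intro exI[of _ "(fst (hd P), fst (last P))"]) (auto simp: insert_commute)
    next
      case False
      then have "P ! i = (t, j')" "P ! Suc i = (t, j)" using i(2) j by (auto simp: doubleton_eq_iff)
      then have "hd P = (fst (hd P), j')" "last P = (fst (last P), j)" using cc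
        by (metis prod.collapse snd_conv)+
      then show ?thesis unfolding Q_def using hS hl uv g
        by (intro exI[of _ "(fst (last P), fst (hd P))"]) (auto simp: insert_commute)
    qed
  qed
  define phi where "phi t = (SOME ab. Q t ab)" for t
  have Qphi: "Q t (phi t)" if "t < n" for t using ex[OF that] unfolding phi_def by (rule someI_ex)
  have fin: "finite (col S a)" for a
    by (rule finite_subset[of _ "{..<n}"]) (use SV in \<open>auto simp: col_def\<close>)
  have inj: "inj_on phi {..<n}"
  proof (rule inj_onI)
    fix t t' assume t: "t \<in> {..<n}" "t' \<in> {..<n}" "phi t = phi t'"
    obtain P where P: "p {(fst (phi t), j), (snd (phi t), j')} = Some P" "edge_on (t,j) (t,j') P"
      "geo (VV n m) P" using Qphi[of t] t unfolding Q_def by auto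
    obtain P' where P': "p {(fst (phi t), j), (snd (phi t), j')} = Some P'" "edge_on (t',j) (t',j') P'"
      using Qphi[of t'] t unfolding Q_def by auto
    have "P = P'" using P(1) P'(1) by simp
    then show "t = t'" using geo_unique[OF P(3) j(3) P(2)] P'(2) by simp
  qed
  have img: "phi ` {..<n} \<subseteq> col S j \<times> col S j'"
  proof
    fix x assume "x \<in> phi ` {..<n}"
    then obtain t where "t < n" "x = phi t" by auto
    then show "x \<in> col S j \<times> col S j'" using Qphi[of t] unfolding Q_def col_def mem_Times_iff by simp
  qed
  have "card {..<n} \<le> card (col S j \<times> col S j')"
    by (rule card_inj_on_le[OF inj img]) (simp add: fin)
  then show ?thesis by (simp add: card_cartesian_product)
qed

lemma card_cols:
  assumes "S \<subseteq> VV n m"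
  shows "card S = (\<Sum>j<m. card (col S j))"
proof -
  have fin: "finite (col S a)" for a
    by (rule finite_subset[of _ "{..<n}"]) (use assms in \<open>auto simp: col_def\<close>)
  have "S = (\<lambda>(j, i). (i, j)) ` (SIGMA j:{..<m}. col S j)"
    using assms by (auto simp: col_def image_iff)
  moreover have "inj_on (\<lambda>(j, i). (i, j)) (SIGMA j:{..<m}. col S j)"
    by (auto simp: inj_on_def)
  ultimately have "card S = card (SIGMA j:{..<m}. col S j)"
    by (metis card_image)
  also have "\<dots> = (\<Sum>j<m. card (col S j))" using fin by simp
  finally show ?thesis .
qed

lemma amgm: "4 * (c * r) \<le> (c + r) * (c + (r::nat))"
proof -
  have "0 \<le> (int c - int r) * (int c - int r)" by simp
  then have "4 * (int c * int r) \<le> (int c + int r) * (int c + int r)"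
    by (simp add: algebra_simps)
  then show ?thesis by (metis of_nat_add of_nat_le_iff of_nat_mult of_nat_numeral)
qed

lemma min_two:
  fixes f :: "nat \<Rightarrow> nat"
  assumes m: "2 \<le> m" and P: "\<forall>j<m. \<forall>j'<m. j \<noteq> j' \<longrightarrow> n \<le> f j * f j'"
  shows "\<exists>c r. c \<le> r \<and> n \<le> c * r \<and> c + (m - 1) * r \<le> (\<Sum>j<m. f j)"
proof -
  obtain j0 where j0: "j0 < m" "\<forall>j<m. f j0 \<le> f j"
  proof -
    have z: "(0::nat) \<in> {..<m}" using m by simp
    have "finite (f ` {..<m})" "f ` {..<m} \<noteq> {}" using z by auto
    then have "Min (f ` {..<m}) \<in> f ` {..<m}" by (rule Min_in)
    then obtain j0 where "j0 < m" "f j0 = Min (f ` {..<m})" by auto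
    then show ?thesis using that by (metis Min_le finite_imageI finite_lessThan image_eqI lessThan_iff)
  qed
  define A where "A = {..<m} - {j0}"
  have el: "(if j0 = 0 then 1 else 0) \<in> A" using m by (auto simp: A_def)
  have A: "finite A" "A \<noteq> {}" "card A = m - 1" using m j0(1) el by (auto simp: A_def)
  have "Min (f ` A) \<in> f ` A" using A by (intro Min_in) auto
  then obtain j1 where j1: "j1 \<in> A" "f j1 = Min (f ` A)" by auto
  have j1min: "\<forall>j\<in>A. f j1 \<le> f j" using j1 A by auto
  have "j1 < m" "j1 \<noteq> j0" using j1 by (auto simp: A_def)
  then have prod: "n \<le> f j0 * f j1" using P j0 by auto
  have "(\<Sum>j<m. f j) = f j0 + sum f A"
    using j0(1) unfolding A_def by (simp add: sum.remove)
  moreover have "card A * f j1 \<le> sum f A" using sum_bounded_below[of A "f j1" f] j1min by simp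
  ultimately show ?thesis using prod j0(2) \<open>j1 < m\<close> A(3)
    by (intro exI[of _ "f j0"] exI[of _ "f j1"]) (auto simp: mult.commute)
qed

lemma L1: "n \<le> c * r \<Longrightarrow> (c + r + 1) * (c + r + 1) \<le> 4 * (n::nat) \<Longrightarrow> False"
proof -
  assume a: "n \<le> c * r" "(c + r + 1) * (c + r + 1) \<le> 4 * n"
  have "(c + r) * (c + r) < (c + r + 1) * (c + r + 1)" by (simp add: algebra_simps)
  with amgm[of c r] a show False by linarith
qed

lemma L2: "n \<le> c * r \<Longrightarrow> (c + r) * (c + r) < 4 * (n::nat) \<Longrightarrow> False"
  using amgm[of c r] by linarith

lemma lower_arith:
  fixes m n k c r :: nat
  assumes m: "2 \<le> m" and k: "1 \<le> k" and kn: "k * k \<le> n" and nk: "n < (k + 1) * (k + 1)"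
    and cr: "c \<le> r" "n \<le> c * r"
  shows "(if n - k * k = 0 then m * k else if n - k * k \<le> k then m * k + (m - 1) else m * k + m)
         \<le> c + (m - 1) * r"
proof -
  obtain m' where m': "m = m' + 2" using m by (metis add.commute le_Suc_ex)
  have crr: "c * r \<le> r * r" using cr(1) by (rule mult_le_mono1)
  show ?thesis
  proof (cases "n = k * k")
    case True
    have rk: "k \<le> r"
    proof (rule ccontr)
      assume "\<not> k \<le> r" then have "r * r < k * k" by (simp add: mult_strict_mono)
      with crr cr True show False by linarith
    qed
    have s: "2 * k \<le> c + r"
    proof (rule ccontr)
      assume "\<not> 2 * k \<le> c + r"
      then have "c + r + 1 \<le> 2 * k" by simp
      then have "(c + r + 1) * (c + r + 1) \<le> (2 * k) * (2 * k)" by (metis mult_le_mono)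
      then show False using L1[OF cr(2)] True by (simp add: algebra_simps)
    qed
    have mk: "m' * k \<le> m' * r" using rk by (rule mult_le_mono2)
    have e: "m * k = 2*k + m'*k" "(m-1)*r = r + m'*r" using m' by (simp_all add: algebra_simps)
    have "m * k \<le> c + (m - 1) * r" using e mk s by linarith
    then show ?thesis using True by simp
  next
    case False
    then have n1: "k * k < n" using kn by simp
    have rk: "k + 1 \<le> r"
    proof (rule ccontr)
      assume "\<not> k + 1 \<le> r" then have "r \<le> k" by simp
      then have "r * r \<le> k * k" by (metis mult_le_mono)
      with crr cr n1 show False by linarith
    qed
    have "m' * (k + 1) \<le> m' * r" using rk by (rule mult_le_mono2)
    then have mr: "m' * k + m' \<le> m' * r" by (simp add: algebra_simps)
    have e: "m * k = 2*k + m'*k" "(m-1)*r = r + m'*r" "m - 1 = m' + 1" using m' by (simp_all add: algebra_simps)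
    show ?thesis
    proof (cases "n - k * k \<le> k")
      case True
      have s: "2 * k + 1 \<le> c + r"
      proof (rule ccontr)
        assume "\<not> 2 * k + 1 \<le> c + r"
        then have "c + r \<le> 2 * k" by simp
        then have "(c + r) * (c + r) \<le> (2 * k) * (2 * k)" by (metis mult_le_mono)
        then show False using L2[OF cr(2)] n1 by (simp add: algebra_simps)
      qed
      have "m * k + (m - 1) \<le> c + (m - 1) * r" using e mr s by linarith
      then show ?thesis using True False by simp
    next
      case False2: False
      have n2: "k * k + k + 1 \<le> n" using False2 by simp
      have s: "2 * k + 2 \<le> c + r"
      proof (rule ccontr)
        assume "\<not> 2 * k + 2 \<le> c + r"
        then have "c + r \<le> 2 * k + 1" by simp
        then have "(c + r) * (c + r) \<le> (2 * k + 1) * (2 * k + 1)" by (metis mult_le_mono)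
        then show False using L2[OF cr(2)] n2 by (simp add: algebra_simps)
      qed
      have "m * k + m \<le> c + (m - 1) * r" using e mr s m' by linarith
      then show ?thesis using n1 False2 by simp
    qed
  qed
qed

lemma lower_bound:
  fixes m n k :: nat
  assumes sg: "strong_edge_geodetic (VV n m) EE S" and m: "2 \<le> m" and k: "1 \<le> k"
    and kn: "k * k \<le> n" and nk: "n < (k + 1) * (k + 1)"
  shows "(if n - k * k = 0 then m * k else if n - k * k \<le> k then m * k + (m - 1) else m * k + m)
         \<le> card S"
proof -
  have SV: "S \<subseteq> VV n m" using sg by (simp add: strong_edge_geodetic_def)
  have "\<forall>j<m. \<forall>j'<m. j \<noteq> j' \<longrightarrow> n \<le> card (col S j) * card (col S j')"
    using pair_bound[OF sg] by blast
  from min_two[OF m this] obtain c r where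
    cr: "c \<le> r" "n \<le> c * r" "c + (m - 1) * r \<le> (\<Sum>j<m. card (col S j))" by blast
  show ?thesis using lower_arith[OF m k kn nk cr(1,2)] cr(3) card_cols[OF SV] by linarith
qed



lemma edge_on_sym: "edge_on x y P = edge_on y x P"
  unfolding edge_on_def by (simp add: insert_commute)

locale constr =
  fixes n m K M :: nat
  assumes K1: "1 \<le> K" and KM: "K \<le> M + 1" and nKM: "n \<le> K * (M + 1)"
    and injh: "M = 0 \<or> (M - 1) * (K + 1) + 1 < n" and n2: "2 \<le> n" and m2: "2 \<le> m"
begin

definition pos :: "nat \<Rightarrow> nat" where "pos x = min (x * (K + 1)) (n - 1)"

lemma pos_lt: "pos x < n" using n2 by (simp add: pos_def)

lemma pos_mono: "x \<le> y \<Longrightarrow> pos x \<le> pos y"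
proof -
  assume "x \<le> y"
  then have "x * (K + 1) \<le> y * (K + 1)" by (rule mult_le_mono1)
  then show ?thesis unfolding pos_def by (rule min.mono) simp
qed

lemma pos0[simp]: "pos 0 = 0" by (simp add: pos_def)

lemma M1: "1 \<le> M"
proof (rule ccontr)
  assume "\<not> 1 \<le> M" then have "M = 0" by simp
  then show False using K1 KM nKM n2 by simp
qed

lemma posM: "pos M = n - 1"
proof -
  have "n \<le> K * M + K" using nKM by (simp add: algebra_simps)
  also have "\<dots> \<le> K * M + M + 1" using KM by simp
  finally have "n - 1 \<le> M * (K + 1)" by (simp add: algebra_simps)
  then show ?thesis by (simp add: pos_def)
qed

lemma pos_small: "x < M \<Longrightarrow> pos x = x * (K + 1) \<and> x * (K + 1) < n - 1"
proof -
  assume x: "x < M"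
  then have "x \<le> M - 1" by simp
  then have "x * (K + 1) \<le> (M - 1) * (K + 1)" by (rule mult_le_mono1)
  moreover have "(M - 1) * (K + 1) + 1 < n" using injh M1 by simp
  ultimately show ?thesis by (simp add: pos_def)
qed

lemma pos_inj: assumes "x \<le> M" "y \<le> M" "pos x = pos y" shows "x = y"
proof (cases "x < M")
  case True
  show ?thesis
  proof (cases "y < M")
    case True2: True
    then have "x * (K + 1) = y * (K + 1)" using pos_small[OF True] pos_small[OF True2] assms(3) by simp
    then have "x = y \<or> K + 1 = 0" by (simp only: mult_cancel2)
    then show ?thesis by simp
  next
    case False
    then have "y = M" using assms by simp
    then show ?thesis using pos_small[OF True] posM assms(3) by simp
  qed
next
  case False
  then have x: "x = M" using assms by simp
  show ?thesis
  proof (cases "y < M")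
    case True
    then show ?thesis using pos_small[OF True] posM assms(3) x by simp
  next
    case False
    then show ?thesis using x assms by simp
  qed
qed

lemma div_le_M: "t < n \<Longrightarrow> t div K \<le> M"
proof -
  assume "t < n"
  then have "t < (M + 1) * K" using nKM by (simp add: mult.commute)
  then have "t div K < M + 1" by (rule less_mult_imp_div_less)
  then show ?thesis by simp
qed

lemma mod_le_M: "t mod K \<le> M"
proof -
  have "t mod K < K" using K1 by simp
  then show ?thesis using KM by simp
qed

lemma between:
  assumes t: "t < n"
  shows "ad (pos (t div K)) t + ad t (pos (t mod K)) = ad (pos (t div K)) (pos (t mod K))"
proof -
  define x where "x = t div K"
  define y where "y = t mod K"
  have ty: "t = x * K + y" by (simp add: x_def y_def)
  have yK: "y < K" using K1 by (simp add: y_def)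
  have "(pos x \<le> t \<and> t \<le> pos y) \<or> (pos y \<le> t \<and> t \<le> pos x)"
  proof (cases "x \<le> y")
    case True
    have "x * K \<le> y * K" using True by (rule mult_le_mono1)
    then have "t \<le> y * (K + 1)" using ty by (simp add: algebra_simps)
    then have a: "t \<le> pos y" using t by (simp add: pos_def)
    have "pos x \<le> x * (K + 1)" by (simp add: pos_def)
    also have "\<dots> \<le> t" using ty True by (simp add: algebra_simps)
    finally show ?thesis using a by simp
  next
    case False
    have "y * K \<le> x * K" using False by (simp add: mult_le_mono1)
    then have b: "y * (K + 1) \<le> t" using ty by (simp add: algebra_simps)
    have "pos y \<le> y * (K + 1)" by (simp add: pos_def)
    then have a: "pos y \<le> t" using b by simp
    have "t \<le> x * (K + 1)" using ty False by (simp add: algebra_simps)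
    then have "t \<le> pos x" using t by (simp add: pos_def)
    then show ?thesis using a by simp
  qed
  then have "ad (pos x) t + ad t (pos y) = ad (pos x) (pos y)" unfolding ad_def by auto
  then show ?thesis by (simp add: x_def y_def)
qed

definition S0a :: "(nat \<times> nat) set" where
  "S0a = (\<lambda>x. (pos x, 0)) ` {..<K}"
definition S0b :: "(nat \<times> nat) set" where
  "S0b = (\<lambda>(x, j). (pos x, j)) ` ({..M} \<times> {1..<m})"
definition S0 :: "(nat \<times> nat) set" where
  "S0 = S0a \<union> S0b"

lemma card_S0: "card S0 \<le> K + (m - 1) * (M + 1)"
proof -
  have "card S0 \<le> card S0a + card S0b"
    unfolding S0_def by (rule card_Un_le)
  also have "\<dots> \<le> card {..<K} + card ({..M} \<times> {1..<m})"
    unfolding S0a_def S0b_def by (intro add_mono card_image_le) auto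
  also have "\<dots> = K + (m - 1) * (M + 1)" by (simp add: card_cartesian_product)
  finally show ?thesis .
qed

lemma S0_V: "S0 \<subseteq> VV n m"
  unfolding S0_def S0a_def S0b_def using pos_lt m2 by auto

lemma in_S0_0: "x < K \<Longrightarrow> (pos x, 0) \<in> S0" unfolding S0_def S0a_def by auto
lemma in_S0_j: "x \<le> M \<Longrightarrow> 1 \<le> j \<Longrightarrow> j < m \<Longrightarrow> (pos x, j) \<in> S0"
  unfolding S0_def S0b_def by (intro UnI2 image_eqI[of _ _ "(x, j)"]) auto

definition G :: "nat \<Rightarrow> nat \<Rightarrow> nat \<Rightarrow> (nat \<times> nat) list" where
  "G t j j' = seg (pos (t div K)) t j @ seg t (pos (t mod K)) j'"

lemma G_short:
  assumes "t < n" "j < m" "j' < m" "j \<noteq> j'"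
  shows "shortest_path (VV n m) EE (pos (t div K), j) (pos (t mod K), j') (G t j j')"
  unfolding G_def
proof (rule shortestI)
  show "walk (VV n m) EE (seg (pos (t div K)) t j @ seg t (pos (t mod K)) j')"
    by (rule geo2_walk) (use assms pos_lt in auto)
  show "length (seg (pos (t div K)) t j @ seg t (pos (t mod K)) j')
        \<le> dd (pos (t div K), j) (pos (t mod K), j') + 1"
    using between[OF assms(1)] assms(4) by (simp add: dd_def)
qed simp_all

lemma seg_short:
  assumes "a < n" "b < n" "j < m"
  shows "shortest_path (VV n m) EE (a, j) (b, j) (seg a b j)"
  by (rule shortestI) (auto intro: seg_walk simp: assms dd_def)

definition D :: "(nat \<times> nat) set \<Rightarrow> (nat \<times> nat) list \<Rightarrow> bool" where
  "D A P \<longleftrightarrow> (\<exists>t j j'. t < n \<and> j' < j \<and> j < m \<and>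
        A = {(pos (t div K), j), (pos (t mod K), j')} \<and> P = G t j j') \<or>
     (\<exists>a b j. a < b \<and> (a, j) \<in> S0 \<and> (b, j) \<in> S0 \<and> A = {(a, j), (b, j)} \<and> P = seg a b j)"

lemma D_unique: assumes "D A P" "D A P'" shows "P = P'"
proof -
  have GG: "P1 = P2" if
    a: "t < n" "j' < j" "j < m" "A = {(pos (t div K), j), (pos (t mod K), j')}" "P1 = G t j j'" and
    b: "s < n" "i' < i" "i < m" "A = {(pos (s div K), i), (pos (s mod K), i')}" "P2 = G s i i'"
    for t j j' s i i' P1 P2
  proof -
    have e: "pos (t div K) = pos (s div K) \<and> j = i \<and> pos (t mod K) = pos (s mod K) \<and> j' = i'"
      using a(2,4) b(2,4) by (auto simp: doubleton_eq_iff)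
    have "t div K = s div K" using pos_inj div_le_M a(1) b(1) e by blast
    moreover have "t mod K = s mod K" using pos_inj mod_le_M e by blast
    ultimately have "t = s" by (metis div_mult_mod_eq)
    then show ?thesis using a(5) b(5) e by simp
  qed
  have SS: "P1 = P2" if
    a: "a < b" "A = {(a, c), (b, c)}" "P1 = seg a b c" and
    b: "a' < b'" "A = {(a', c'), (b', c')}" "P2 = seg a' b' c'"
    for a b c a' b' c' P1 P2
  proof -
    have "a = a' \<and> b = b' \<and> c = c'" using a(1,2) b(1,2) by (auto simp: doubleton_eq_iff)
    then show ?thesis using a(3) b(3) by simp
  qed
  have GS: False if
    a: "j' < j" "A = {(x, j), (y, j')}" and
    b: "A = {(a', c'), (b', c')}"
    for x y j j' a' b' c'
    using a b by (auto simp: doubleton_eq_iff)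
  from assms show ?thesis unfolding D_def
    apply (elim disjE exE conjE)
    subgoal for t j j' s i i' by (rule GG) assumption+
    subgoal by (metis GS)
    subgoal by (metis GS)
    subgoal for a b c a' b' c' by (rule SS) assumption+
    done
qed

lemma D_short: assumes "D {u, v} P"
  shows "shortest_path (VV n m) EE u v P \<or> shortest_path (VV n m) EE v u P"
  using assms unfolding D_def
proof (elim disjE exE conjE)
  fix t j j' assume a: "t < n" "j' < j" "j < m" "{u, v} = {(pos (t div K), j), (pos (t mod K), j')}"
    "P = G t j j'"
  have "shortest_path (VV n m) EE (pos (t div K), j) (pos (t mod K), j') P"
    using G_short[of t j j'] a by simp
  then show ?thesis using a(4) by (auto simp: doubleton_eq_iff)
next
  fix a b j assume a: "a < b" "(a, j) \<in> S0" "(b, j) \<in> S0" "{u, v} = {(a, j), (b, j)}" "P = seg a b j"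
  have "shortest_path (VV n m) EE (a, j) (b, j) P"
    using seg_short[of a b j] a S0_V by auto
  then show ?thesis using a(4) by (auto simp: doubleton_eq_iff)
qed

definition pp :: "(nat \<times> nat) set \<Rightarrow> (nat \<times> nat) list option" where
  "pp A = (if \<exists>P. D A P then Some (SOME P. D A P) else None)"

lemma pp_D: "pp A = Some P \<Longrightarrow> D A P"
  unfolding pp_def by (auto split: if_splits intro: someI_ex)

lemma D_pp: "D A P \<Longrightarrow> pp A = Some P"
proof -
  assume d: "D A P"
  then have "D A (SOME P. D A P)" by (rule someI)
  then have "(SOME P. D A P) = P" using D_unique d by blast
  then show ?thesis using d unfolding pp_def by auto
qed


lemma col_cover:
  assumes l: "Suc l < n" and c: "c < m"
  shows "\<exists>u\<in>S0. \<exists>v\<in>S0. \<exists>P. u \<noteq> v \<and> D {u, v} P \<and> edge_on (l, c) (Suc l, c) P"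
proof (cases "c = 0")
  case False
  have u: "(0, c) \<in> S0" using in_S0_j[of 0 c] False c by simp
  have v: "(n - 1, c) \<in> S0" using in_S0_j[of M c] False c posM by simp
  have d: "D {(0, c), (n - 1, c)} (seg 0 (n - 1) c)"
    unfolding D_def using u v l by (intro disjI2 exI[of _ 0] exI[of _ "n - 1"] exI[of _ c]) auto
  have "edge_on (l, c) (Suc l, c) (seg 0 (n - 1) c)" by (rule seg_edge) (use l in auto)
  then show ?thesis using u v d l by (intro bexI[OF _ u] bexI[OF _ v] exI[of _ "seg 0 (n - 1) c"]) auto
next
  case True
  show ?thesis
  proof (cases "Suc l \<le> pos (K - 1)")
    case True2: True
    have u: "(0, c) \<in> S0" using in_S0_0[of 0] K1 True by simp
    have v: "(pos (K - 1), c) \<in> S0" using in_S0_0[of "K - 1"] K1 True by simp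
    have d: "D {(0, c), (pos (K - 1), c)} (seg 0 (pos (K - 1)) c)"
      unfolding D_def using u v True2 by (intro disjI2 exI[of _ 0] exI[of _ "pos (K - 1)"] exI[of _ c]) auto
    have "edge_on (l, c) (Suc l, c) (seg 0 (pos (K - 1)) c)" by (rule seg_edge) (use True2 in auto)
    then show ?thesis using u v d True2
      by (intro bexI[OF _ u] bexI[OF _ v] exI[of _ "seg 0 (pos (K - 1)) c"]) auto
  next
    case False2: False
    define t where "t = n - 1"
    have t: "t < n" using n2 by (simp add: t_def)
    have u: "(pos (t div K), 1) \<in> S0" using in_S0_j[of "t div K" 1] div_le_M[OF t] m2 by simp
    have v: "(pos (t mod K), c) \<in> S0" using in_S0_0[of "t mod K"] K1 True by simp
    have d: "D {(pos (t div K), 1), (pos (t mod K), c)} (G t 1 c)"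
      unfolding D_def using t m2 True by (intro disjI1 exI[of _ t] exI[of _ 1] exI[of _ c]) auto
    have "t mod K \<le> K - 1" using K1 by (metis Suc_pred' less_Suc_eq_le mod_less_divisor not_one_le_zero not_gr_zero)
    then have "pos (t mod K) \<le> pos (K - 1)" by (rule pos_mono)
    then have "edge_on (l, c) (Suc l, c) (seg t (pos (t mod K)) c)"
      using False2 l by (intro seg_edge) (auto simp: t_def)
    then have "edge_on (l, c) (Suc l, c) (G t 1 c)" unfolding G_def by (rule edge_on_app2)
    then show ?thesis using u v d True
      by (intro bexI[OF _ u] bexI[OF _ v] exI[of _ "G t 1 c"]) auto
  qed
qed

lemma K_cover:
  assumes i: "i < n" and c: "c < m" "c' < m" "c \<noteq> c'"
  shows "\<exists>u\<in>S0. \<exists>v\<in>S0. \<exists>P. u \<noteq> v \<and> D {u, v} P \<and> edge_on (i, c) (i, c') P"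
proof -
  define j where "j = max c c'"
  define j' where "j' = min c c'"
  have jj: "j' < j" "j < m" "1 \<le> j" using c by (auto simp: j_def j'_def)
  have u: "(pos (i div K), j) \<in> S0" using in_S0_j[of "i div K" j] div_le_M[OF i] jj by simp
  have v: "(pos (i mod K), j') \<in> S0"
  proof (cases "j' = 0")
    case True then show ?thesis using in_S0_0[of "i mod K"] K1 by simp
  next
    case False then show ?thesis using in_S0_j[of "i mod K" j'] mod_le_M jj by simp
  qed
  have d: "D {(pos (i div K), j), (pos (i mod K), j')} (G i j j')"
    unfolding D_def using i jj by (intro disjI1 exI[of _ i] exI[of _ j] exI[of _ j']) auto
  have "edge_on (last (seg (pos (i div K)) i j)) (hd (seg i (pos (i mod K)) j')) (G i j j')"
    unfolding G_def by (rule edge_on_junction) simp_all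
  then have e: "edge_on (i, j) (i, j') (G i j j')" by simp
  have "edge_on (i, c) (i, c') (G i j j')"
  proof (cases "c < c'")
    case True
    then have "edge_on (i, c') (i, c) (G i j j')" using e by (simp add: j_def j'_def)
    then show ?thesis by (subst edge_on_sym)
  next
    case False then show ?thesis using e c(3) by (simp add: j_def j'_def)
  qed
  then show ?thesis using u v d jj
    by (intro bexI[OF _ u] bexI[OF _ v] exI[of _ "G i j j'"]) auto
qed

lemma sg_S0: "strong_edge_geodetic (VV n m) EE S0"
  unfolding strong_edge_geodetic_def
proof (intro conjI exI[of _ pp] ballI impI allI)
  show "S0 \<subseteq> VV n m" by (rule S0_V)
  fix u v P assume "u \<in> S0" "v \<in> S0" "u \<noteq> v" "pp {u, v} = Some P"
  then show "shortest_path (VV n m) EE u v P \<or> shortest_path (VV n m) EE v u P"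
    using D_short pp_D by blast
next
  fix x y assume xy: "x \<in> VV n m" "y \<in> VV n m" "EE x y"
  obtain i c where x: "x = (i, c)" by (cases x)
  obtain i' c' where y: "y = (i', c')" by (cases y)
  have "\<exists>u\<in>S0. \<exists>v\<in>S0. \<exists>P. u \<noteq> v \<and> D {u, v} P \<and> edge_on x y P"
  proof (cases "i = i'")
    case True
    then have "c \<noteq> c'" using xy(3) x y by (auto simp: cart_adj_def path_adj_def complete_adj_def)
    then show ?thesis using K_cover[of i c c'] xy x y True by auto
  next
    case False
    then have cc: "c = c'" and pa: "Suc i = i' \<or> Suc i' = i"
      using xy(3) x y by (auto simp: cart_adj_def path_adj_def complete_adj_def)
    show ?thesis
    proof (cases "Suc i = i'")
      case True
      then show ?thesis using col_cover[of i c] xy x y cc by auto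
    next
      case False
      then have "Suc i' = i" using pa by simp
      then have "Suc i' < n" "c < m" using xy x by auto
      then obtain u v P where "u \<in> S0" "v \<in> S0" "u \<noteq> v" "D {u, v} P" "edge_on (i', c) (Suc i', c) P"
        using col_cover by blast
      moreover have "edge_on x y P" using calculation(5) \<open>Suc i' = i\<close> x y cc by (subst edge_on_sym) simp
      ultimately show ?thesis by blast
    qed
  qed
  then show "\<exists>u\<in>S0. \<exists>v\<in>S0. \<exists>P. u \<noteq> v \<and> pp {u, v} = Some P \<and> edge_on x y P"
    using D_pp by blast
qed

end

lemma sg_e_eq:
  assumes fin: "finite V" and low: "\<And>S. strong_edge_geodetic V E S \<Longrightarrow> B \<le> card S"
    and s0: "strong_edge_geodetic V E S0" and c0: "card S0 \<le> B"
  shows "sg_e V E = B"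
proof -
  define X where "X = {card S |S. strong_edge_geodetic V E S}"
  have "X \<subseteq> {..card V}"
    unfolding X_def strong_edge_geodetic_def using fin by (auto intro: card_mono)
  then have fX: "finite X" by (rule finite_subset) simp
  have inX: "card S0 \<in> X" unfolding X_def using s0 by blast
  have "Min X \<le> card S0" using fX inX by (rule Min_le)
  moreover have "Min X \<in> X" using fX inX by (intro Min_in) auto
  then have "B \<le> Min X" unfolding X_def using low by auto
  ultimately show ?thesis using c0 unfolding sg_e_def X_def[symmetric] by simp
qed


lemma main_gen:
  fixes m n k :: nat
  assumes m: "2 \<le> m" and n: "2 \<le> n" and k: "1 \<le> k" and kn: "k * k \<le> n"
    and nk: "n < (k + 1) * (k + 1)"
  shows "sge_Pn_Km n m =
    (if n - k * k = 0 then m * k else if n - k * k \<le> k then m * k + (m - 1) else m * k + m)"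
proof -
  define B where "B = (if n - k * k = 0 then m * k else if n - k * k \<le> k then m * k + (m - 1) else m * k + m)"
  have low: "B \<le> card S" if "strong_edge_geodetic (VV n m) EE S" for S
    using lower_bound[OF that m k kn nk] unfolding B_def .
  have fin: "finite (VV n m)" by simp
  obtain k' where k': "k = Suc k'" using k by (cases k) auto
  obtain m' where m': "m = Suc m'" using m by (cases m) auto
  have up: "\<exists>S0. strong_edge_geodetic (VV n m) EE S0 \<and> card S0 \<le> B"
  proof (cases "n = k * k")
    case True
    have ih: "k' = 0 \<or> (k' - 1) * (k + 1) + 1 < n"
    proof (cases k')
      case 0 then show ?thesis by simp
    next
      case (Suc k'')
      have "k'' * (k'' + 3) + 1 < (k'' + 2) * (k'' + 2)" by (simp add: algebra_simps)
      then show ?thesis using Suc k' True by (simp add: algebra_simps)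
    qed
    interpret c: constr n m k k'
      by unfold_locales (use k' True ih n m in \<open>simp_all add: algebra_simps\<close>)
    have "card c.S0 \<le> B" using c.card_S0 True k' m' unfolding B_def by (simp add: algebra_simps)
    then show ?thesis using c.sg_S0 by blast
  next
    case False
    then have n1: "k * k < n" using kn by simp
    show ?thesis
    proof (cases "n - k * k \<le> k")
      case True
      have ih: "k = 0 \<or> (k - 1) * (k + 1) + 1 < n"
      proof -
        have "k' * (k' + 2) + 1 = k * k" using k' by (simp add: algebra_simps)
        then show ?thesis using n1 k' by simp
      qed
      have nkk: "n \<le> k * (k + 1)" using True n1 by (simp add: algebra_simps)
      interpret c: constr n m k k
        by unfold_locales (use k ih n m nkk in simp_all)
      have "card c.S0 \<le> B" using c.card_S0 True n1 m' unfolding B_def by (simp add: algebra_simps)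
      then show ?thesis using c.sg_S0 by blast
    next
      case False2: False
      have n3: "k * k + k + 1 \<le> n" using False2 by simp
      have ih: "k = 0 \<or> (k - 1) * (k + 1 + 1) + 1 < n"
      proof -
        have "k' * (k' + 3) + 1 < k * k + k + 1" using k' by (simp add: algebra_simps)
        then show ?thesis using n3 k' by (simp add: algebra_simps)
      qed
      have nkk: "n \<le> (k + 1) * (k + 1)" using nk by simp
      interpret c: constr n m "k + 1" k
        by unfold_locales (use k ih n m nkk in simp_all)
      have "card c.S0 \<le> B" using c.card_S0 False2 n1 m' unfolding B_def by (simp add: algebra_simps)
      then show ?thesis using c.sg_S0 by blast
    qed
  qed
  then obtain S0 where "strong_edge_geodetic (VV n m) EE S0" "card S0 \<le> B" by blast
  then have "sg_e (VV n m) EE = B" using sg_e_eq[OF fin low] by blast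
  then show ?thesis unfolding sge_Pn_Km_def B_def .
qed

theorem mainTheorem12:
  fixes m n k h :: nat
  assumes "m \<ge> 3" and "n \<ge> 2" and "k \<ge> 1"
    and "k^2 \<le> n" and "n < (k+1)^2" and "h = n - k^2"
  shows "sge_Pn_Km n m =
           (if h = 0 then m * k
            else if h \<le> k then m * k + (m - 1)
            else m * k + m)
         \<and> sge_Pn_Km 2 m = 2 * m - 1"
proof
  have m2: "2 \<le> m" using assms(1) by simp
  show "sge_Pn_Km n m = (if h = 0 then m * k else if h \<le> k then m * k + (m - 1) else m * k + m)"
    using main_gen[OF m2 assms(2) assms(3)] assms(4,5,6) by (simp add: power2_eq_square)
  have "sge_Pn_Km 2 m = (if 2 - 1 * 1 = (0::nat) then m * 1 else if 2 - 1 * 1 \<le> (1::nat) then m * 1 + (m - 1) else m * 1 + m)"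
    by (rule main_gen[OF m2]) simp_all
  then show "sge_Pn_Km 2 m = 2 * m - 1" using m2 by simp
qed

end
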